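(* Let $k\in\mathbb Z_{\ge1}$. With probability $1-\mathrm{negl}(n)$ over $G\sim G(n,1/2)$ the following holds: for every vertex set $S\subseteq[n]$ of size $k$ and every family $\mathcal B\subseteq\{B:\emptyset\ne B\subseteq S\}$ there exists a vertex $v\notin S$ such that for every $\emptyset\ne B\subseteq S$, we have $B\in\mathcal B$ if and only if the number of vertices that are adjacent to every vertex in $\{v\}\cup B$ and non-adjacent to every vertex in $S\setminus B$ is odd.
   Context: $G(n,1/2)$ is the uniform distribution over simple graphs on vertex set $[n]$ (each pair an edge independently with probability $1/2$). A function is negligible ($\mathrm{negl}(n)$) if eventually below $1/p(n)$ in absolute value for every polynomial $p$. *)

theory Defs
  imports "HOL-Probability.Probability"
begin

text \<open>Vertex set [n] is rendered as {..<n}. A simple graph on [n] is a set of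
  2-element subsets of [n] (its edge set).\<close>

definition all_pairs :: "nat \<Rightarrow> nat set set" where
  "all_pairs n = {e. e \<subseteq> {..<n} \<and> card e = 2}"

text \<open>G(n,1/2): the uniform distribution over all edge sets, i.e. each pair is an
  edge independently with probability 1/2.\<close>

definition Gnp_half :: "nat \<Rightarrow> nat set set pmf" where
  "Gnp_half n = pmf_of_set (Pow (all_pairs n))"

definition adj :: "nat set set \<Rightarrow> nat \<Rightarrow> nat \<Rightarrow> bool" where
  "adj E u v \<longleftrightarrow> {u, v} \<in> E"

text \<open>Negligible: eventually below 1/p(n) in absolute value for every polynomial p;
  equivalently for every monomial n^c.\<close>

definition negl :: "(nat \<Rightarrow> real) \<Rightarrow> bool" where
  "negl f \<longleftrightarrow> (\<forall>c::nat. \<forall>\<^sub>F n in sequentially. \<bar>f n\<bar> < 1 / real n ^ c)"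

end

theory Submission
  imports Defs
begin

definition prb :: "'a set \<Rightarrow> ('a set \<Rightarrow> bool) \<Rightarrow> real" where
  "prb U P = real (card {E\<in>Pow U. P E}) / 2 ^ card U"

lemma prb_cong: "(\<And>E. E \<subseteq> U \<Longrightarrow> P E = Q E) \<Longrightarrow> prb U P = prb U Q"
  unfolding prb_def by (rule arg_cong[where f="\<lambda>x. real (card x) / 2 ^ card U"]) auto

lemma prb_mono: assumes "finite U" "\<And>E. E \<subseteq> U \<Longrightarrow> P E \<Longrightarrow> Q E" shows "prb U P \<le> prb U Q"
proof -
  have "card {E\<in>Pow U. P E} \<le> card {E\<in>Pow U. Q E}" using assms by (intro card_mono) auto
  then show ?thesis unfolding prb_def by (intro divide_right_mono) auto
qed

lemma prb_nonneg: "prb U P \<ge> 0" unfolding prb_def by simp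

lemma prb_le1: assumes "finite U" shows "prb U P \<le> 1"
proof -
  have "card {E\<in>Pow U. P E} \<le> card (Pow U)" using assms by (intro card_mono) auto
  then show ?thesis using assms unfolding prb_def by (simp add: card_Pow)
qed

lemma prb_compl: assumes "finite U" shows "prb U (\<lambda>E. \<not> P E) = 1 - prb U P"
proof -
  have "{E\<in>Pow U. \<not> P E} = Pow U - {E\<in>Pow U. P E}" by auto
  then have "card {E\<in>Pow U. \<not> P E} = card (Pow U) - card {E\<in>Pow U. P E}"
    using assms by (metis (no_types, lifting) card_Diff_subset finite_Pow_iff finite_subset mem_Collect_eq subsetI)
  moreover have "card {E\<in>Pow U. P E} \<le> card (Pow U)" using assms by (intro card_mono) auto
  ultimately show ?thesis using assms unfolding prb_def
    by (simp add: card_Pow of_nat_diff diff_divide_distrib)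
qed

lemma prb_union: assumes "finite U" "finite I"
  shows "prb U (\<lambda>E. \<exists>i\<in>I. P i E) \<le> (\<Sum>i\<in>I. prb U (P i))"
proof -
  have "{E\<in>Pow U. \<exists>i\<in>I. P i E} = (\<Union>i\<in>I. {E\<in>Pow U. P i E})" by auto
  then have "card {E\<in>Pow U. \<exists>i\<in>I. P i E} \<le> (\<Sum>i\<in>I. card {E\<in>Pow U. P i E})"
    using card_UN_le[OF assms(2), of "\<lambda>i. {E\<in>Pow U. P i E}"] by simp
  then have "real (card {E\<in>Pow U. \<exists>i\<in>I. P i E}) \<le> real (\<Sum>i\<in>I. card {E\<in>Pow U. P i E})"
    by (simp only: of_nat_le_iff)
  also have "\<dots> = (\<Sum>i\<in>I. real (card {E\<in>Pow U. P i E}))" by (rule of_nat_sum)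
  finally have *: "real (card {E\<in>Pow U. \<exists>i\<in>I. P i E}) / 2 ^ card U
     \<le> (\<Sum>i\<in>I. real (card {E\<in>Pow U. P i E})) / 2 ^ card U"
    by (rule divide_right_mono) simp
  have "(\<Sum>i\<in>I. prb U (P i)) = (\<Sum>i\<in>I. real (card {E\<in>Pow U. P i E})) / 2 ^ card U"
    unfolding prb_def by (rule sum_divide_distrib[symmetric])
  with * show ?thesis unfolding prb_def by simp
qed

lemma prb_point: assumes "finite U" "E0 \<subseteq> U" "P E0" shows "prb U P \<ge> 1 / 2 ^ card U"
proof -
  have "E0 \<in> {E\<in>Pow U. P E}" using assms by simp
  moreover have "finite {E\<in>Pow U. P E}" using assms by simp
  ultimately have "card {E\<in>Pow U. P E} \<ge> 1"
    by (metis One_nat_def Suc_leI card_gt_0_iff empty_iff)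
  then show ?thesis unfolding prb_def by (intro divide_right_mono) auto
qed

lemma prb_eq_point: assumes "finite U" "t \<subseteq> U" shows "prb U (\<lambda>E. E = t) = 1 / 2 ^ card U"
proof -
  have "{E\<in>Pow U. E = t} = {t}" using assms by auto
  then show ?thesis unfolding prb_def by simp
qed

lemma prb_split:
  assumes "finite X" "finite Y" "X \<inter> Y = {}"
  shows "prb (X \<union> Y) P = (\<Sum>a\<in>Pow X. prb Y (\<lambda>b. P (a \<union> b))) / 2 ^ card X"
proof -
  have eq: "{E\<in>Pow (X\<union>Y). P E} = (\<lambda>(a,b). a \<union> b) ` (SIGMA a:Pow X. {b\<in>Pow Y. P (a\<union>b)})"
  proof (rule set_eqI, rule iffI)
    fix E assume "E \<in> {E\<in>Pow (X\<union>Y). P E}"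
    then have EE: "(E \<inter> X) \<union> (E \<inter> Y) = E" "P E" by auto
    then have "P ((E \<inter> X) \<union> (E \<inter> Y))" by simp
    with EE show "E \<in> (\<lambda>(a,b). a \<union> b) ` (SIGMA a:Pow X. {b\<in>Pow Y. P (a\<union>b)})"
      by (intro image_eqI[of _ _ "(E \<inter> X, E \<inter> Y)"]) auto
  qed auto
  have inj: "inj_on (\<lambda>(a,b). a \<union> b) (SIGMA a:Pow X. {b\<in>Pow Y. P (a\<union>b)})"
  proof (rule inj_onI, clarsimp)
    fix a b a' b' assume "a \<subseteq> X" "b \<subseteq> Y" "a' \<subseteq> X" "b' \<subseteq> Y" "a \<union> b = a' \<union> b'"
    then show "a = a' \<and> b = b'" using assms(3) by blast
  qed
  have "card {E\<in>Pow (X\<union>Y). P E} = (\<Sum>a\<in>Pow X. card {b\<in>Pow Y. P (a\<union>b)})"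
    unfolding eq card_image[OF inj] using assms by (subst card_SigmaI) auto
  then have "prb (X \<union> Y) P = (\<Sum>a\<in>Pow X. real (card {b\<in>Pow Y. P (a\<union>b)})) / (2 ^ card X * 2 ^ card Y)"
    unfolding prb_def using assms by (simp add: card_Un_disjoint power_add)
  also have "\<dots> = (\<Sum>a\<in>Pow X. prb Y (\<lambda>b. P (a \<union> b))) / 2 ^ card X"
    unfolding prb_def sum_divide_distrib[symmetric] by (simp add: field_simps)
  finally show ?thesis .
qed



lemma prb_false[simp]: "prb U (\<lambda>E. False) = 0" unfolding prb_def by simp

lemma prb_prod:
  assumes "finite A" "\<forall>v\<in>A. finite (Y v)" "\<forall>v\<in>A. \<forall>v'\<in>A. v \<noteq> v' \<longrightarrow> Y v \<inter> Y v' = {}"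
  shows "prb (\<Union>v\<in>A. Y v) (\<lambda>E. \<forall>v\<in>A. P v (E \<inter> Y v)) = (\<Prod>v\<in>A. prb (Y v) (P v))"
  using assms
proof (induction A rule: finite_induct)
  case empty
  then show ?case by (simp add: prb_def)
next
  case (insert a A)
  let ?UA = "\<Union>v\<in>A. Y v"
  have fin: "finite (Y a)" "finite ?UA" using insert by auto
  have disj: "Y a \<inter> ?UA = {}" using insert.prems insert.hyps by fastforce
  have IH: "prb ?UA (\<lambda>E. \<forall>v\<in>A. P v (E \<inter> Y v)) = (\<Prod>v\<in>A. prb (Y v) (P v))"
    using insert by auto
  have U: "(\<Union>v\<in>insert a A. Y v) = Y a \<union> ?UA" by simp
  have "prb (\<Union>v\<in>insert a A. Y v) (\<lambda>E. \<forall>v\<in>insert a A. P v (E \<inter> Y v))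
     = (\<Sum>e\<in>Pow (Y a). prb ?UA (\<lambda>b. \<forall>v\<in>insert a A. P v ((e \<union> b) \<inter> Y v))) / 2 ^ card (Y a)"
    unfolding U by (rule prb_split[OF fin disj])
  also have "\<dots> = (\<Sum>e\<in>Pow (Y a). (if P a e then prb ?UA (\<lambda>E. \<forall>v\<in>A. P v (E \<inter> Y v)) else 0)) / 2 ^ card (Y a)"
  proof (intro arg_cong[where f="\<lambda>x. x / 2 ^ card (Y a)"] sum.cong refl)
    fix e assume e: "e \<in> Pow (Y a)"
    have "prb ?UA (\<lambda>b. \<forall>v\<in>insert a A. P v ((e \<union> b) \<inter> Y v))
        = prb ?UA (\<lambda>b. P a e \<and> (\<forall>v\<in>A. P v (b \<inter> Y v)))"
    proof (rule prb_cong)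
      fix b assume b: "b \<subseteq> ?UA"
      have 1: "(e \<union> b) \<inter> Y a = e" using e b disj by blast
      have 2: "(e \<union> b) \<inter> Y v = b \<inter> Y v" if "v \<in> A" for v
      proof -
        have "Y a \<inter> Y v = {}" using insert.prems(2) insert.hyps(2) that by auto
        then show ?thesis using e by blast
      qed
      show "(\<forall>v\<in>insert a A. P v ((e \<union> b) \<inter> Y v)) = (P a e \<and> (\<forall>v\<in>A. P v (b \<inter> Y v)))"
        using 1 2 by simp
    qed
    then show "prb ?UA (\<lambda>b. \<forall>v\<in>insert a A. P v ((e \<union> b) \<inter> Y v))
        = (if P a e then prb ?UA (\<lambda>E. \<forall>v\<in>A. P v (E \<inter> Y v)) else 0)"
      by (cases "P a e") simp_all
  qed
  also have "\<dots> = (\<Sum>e\<in>{e\<in>Pow (Y a). P a e}. prb ?UA (\<lambda>E. \<forall>v\<in>A. P v (E \<inter> Y v))) / 2 ^ card (Y a)"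
    by (subst sum.inter_filter[symmetric]) (use fin in auto)
  also have "\<dots> = prb (Y a) (P a) * prb ?UA (\<lambda>E. \<forall>v\<in>A. P v (E \<inter> Y v))"
    unfolding prb_def by simp
  also have "\<dots> = (\<Prod>v\<in>insert a A. prb (Y v) (P v))"
    using IH insert.hyps by simp
  finally show ?case .
qed

lemma poly_geom_lim:
  fixes s :: real assumes "0 < s" "s < 1"
  shows "(\<lambda>n. real n ^ Suc m * s ^ n) \<longlonglongrightarrow> 0"
proof -
  define t where "t = root (Suc m) s"
  have t: "0 < t" "t < 1" using assms unfolding t_def
    by (auto simp: real_root_lt_1_iff)
  have t3: "t ^ Suc m = s" unfolding t_def using assms by (intro real_root_pow_pos) auto
  have "(\<lambda>n. of_nat n * t ^ n) \<longlonglongrightarrow> 0" by (rule powser_times_n_limit_0) (use t in simp)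
  then have lim: "(\<lambda>n. (of_nat n * t ^ n) ^ Suc m) \<longlonglongrightarrow> 0 ^ Suc m" by (intro tendsto_intros)
  have eq: "(\<lambda>n. (of_nat n * t ^ n) ^ Suc m) = (\<lambda>n. real n ^ Suc m * s ^ n)"
  proof
    fix n
    have "(of_nat n * t ^ n) ^ Suc m = real n ^ Suc m * (t ^ Suc m) ^ n"
      by (simp only: power_mult_distrib power_mult[symmetric] mult.commute)
    then show "(of_nat n * t ^ n) ^ Suc m = real n ^ Suc m * s ^ n" by (simp only: t3)
  qed
  show ?thesis using lim unfolding eq by simp
qed



definition goodv :: "nat \<Rightarrow> nat set \<Rightarrow> nat set set \<Rightarrow> nat set set \<Rightarrow> nat \<Rightarrow> bool" where
  "goodv n S Bf E v \<longleftrightarrow> (\<forall>B. B \<noteq> {} \<and> B \<subseteq> S \<longrightarrow>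
                    (B \<in> Bf \<longleftrightarrow>
                     odd (card {w\<in>{..<n}. (\<forall>u\<in>insert v B. adj E w u) \<and>
                                          (\<forall>u\<in>S - B. \<not> adj E w u)})))"

lemma goodv_cong:
  assumes "\<And>w u. u \<in> insert v S \<Longrightarrow> ({w,u} \<in> E \<longleftrightarrow> {w,u} \<in> E')"
  shows "goodv n S Bf E v = goodv n S Bf E' v"
proof -
  have "{w\<in>{..<n}. (\<forall>u\<in>insert v B. adj E w u) \<and> (\<forall>u\<in>S - B. \<not> adj E w u)}
      = {w\<in>{..<n}. (\<forall>u\<in>insert v B. adj E' w u) \<and> (\<forall>u\<in>S - B. \<not> adj E' w u)}"
    if "B \<subseteq> S" for B
  proof -
    have "adj E w u = adj E' w u" if "u \<in> insert v B \<or> u \<in> S - B" for w u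
      using assms[of u w] that \<open>B \<subseteq> S\<close> unfolding adj_def by blast
    then show ?thesis by blast
  qed
  then show ?thesis unfolding goodv_def by simp
qed

lemma parity_fix:
  assumes vS: "v \<notin> S"
    and rn: "\<forall>B\<in>Bs. r B < n" and rv: "\<forall>B\<in>Bs. r B \<noteq> v" and rS: "\<forall>B\<in>Bs. r B \<notin> S"
    and rpat: "\<forall>B\<in>Bs. \<forall>s\<in>S. ({r B, s} \<in> E0 \<longleftrightarrow> s \<in> B)"
    and rE0: "\<forall>B\<in>Bs. {r B, v} \<notin> E0"
    and Bs: "Bs = {B. B \<noteq> {} \<and> B \<subseteq> S}"
  shows "\<exists>T\<subseteq>Bs. goodv n S Bf (E0 \<union> (\<lambda>B. {v, r B}) ` T) v"
proof -
  define C0 where "C0 B = {w\<in>{..<n}. w \<noteq> r B \<and> {w,v} \<in> E0 \<and> (\<forall>u\<in>B. {w,u}\<in>E0) \<and> (\<forall>u\<in>S-B. {w,u}\<notin>E0)}" for B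
  define T where "T = {B\<in>Bs. (B\<in>Bf \<longleftrightarrow> even (card (C0 B)))}"
  define E where "E = E0 \<union> (\<lambda>B. {v, r B}) ` T"
  have TBs: "T \<subseteq> Bs" unfolding T_def by auto
  have adjS: "adj E w u \<longleftrightarrow> {w,u} \<in> E0" if "u \<in> S" for w u
  proof -
    have "{w,u} \<notin> (\<lambda>B. {v, r B}) ` T"
    proof
      assume "{w,u} \<in> (\<lambda>B. {v, r B}) ` T"
      then obtain B where B: "B\<in>T" "{w,u} = {v, r B}" by auto
      then have "u = v \<or> u = r B" by (auto simp: doubleton_eq_iff)
      then show False using that vS rS B(1) TBs by auto
    qed
    then show ?thesis unfolding adj_def E_def by auto
  qed
  have adjv: "adj E w v \<longleftrightarrow> {w,v} \<in> E0 \<or> (\<exists>B'\<in>T. w = r B')" for w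
  proof -
    have "{w,v} \<in> (\<lambda>B. {v, r B}) ` T \<longleftrightarrow> (\<exists>B'\<in>T. w = r B')"
    proof
      assume "{w,v} \<in> (\<lambda>B. {v, r B}) ` T"
      then obtain B where B: "B\<in>T" "{w,v} = {v, r B}" by auto
      then have "r B \<noteq> v" using rv TBs by auto
      then have "w = r B" using B(2) by (auto simp: doubleton_eq_iff)
      then show "\<exists>B'\<in>T. w = r B'" using B by auto
    next
      assume "\<exists>B'\<in>T. w = r B'"
      then obtain B where "B\<in>T" "w = r B" by auto
      then show "{w,v} \<in> (\<lambda>B. {v, r B}) ` T" by (auto simp: insert_commute)
    qed
    then show ?thesis unfolding adj_def E_def by auto
  qed
  have uniq: "B' = B" if "B\<in>Bs" "B'\<in>Bs" "\<forall>u\<in>B. {r B',u}\<in>E0" "\<forall>u\<in>S-B. {r B',u}\<notin>E0" for B B'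
  proof -
    have "s \<in> B' \<longleftrightarrow> s \<in> B" if "s \<in> S" for s
      using rpat \<open>B'\<in>Bs\<close> that \<open>\<forall>u\<in>B. {r B',u}\<in>E0\<close> \<open>\<forall>u\<in>S-B. {r B',u}\<notin>E0\<close> by blast
    moreover have "B \<subseteq> S" "B' \<subseteq> S" using that Bs by auto
    ultimately show ?thesis by blast
  qed
  have CS: "{w\<in>{..<n}. (\<forall>u\<in>insert v B. adj E w u) \<and> (\<forall>u\<in>S - B. \<not> adj E w u)}
      = C0 B \<union> (if B \<in> T then {r B} else {})" if B: "B \<in> Bs" for B
  proof (rule set_eqI)
    fix w
    have BS: "B \<subseteq> S" using B Bs by auto
    have "w \<in> {w\<in>{..<n}. (\<forall>u\<in>insert v B. adj E w u) \<and> (\<forall>u\<in>S - B. \<not> adj E w u)}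
       \<longleftrightarrow> w < n \<and> ({w,v} \<in> E0 \<or> (\<exists>B'\<in>T. w = r B')) \<and> (\<forall>u\<in>B. {w,u}\<in>E0) \<and> (\<forall>u\<in>S-B. {w,u}\<notin>E0)"
    proof -
      have 1: "(\<forall>u\<in>B. adj E w u) \<longleftrightarrow> (\<forall>u\<in>B. {w,u}\<in>E0)" using adjS BS by blast
      have 2: "(\<forall>u\<in>S-B. \<not> adj E w u) \<longleftrightarrow> (\<forall>u\<in>S-B. {w,u}\<notin>E0)" using adjS by blast
      show ?thesis using 1 2 adjv[of w] by auto
    qed
    also have "\<dots> \<longleftrightarrow> w \<in> C0 B \<union> (if B \<in> T then {r B} else {})"
    proof
      assume h: "w < n \<and> ({w,v} \<in> E0 \<or> (\<exists>B'\<in>T. w = r B')) \<and> (\<forall>u\<in>B. {w,u}\<in>E0) \<and> (\<forall>u\<in>S-B. {w,u}\<notin>E0)"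
      show "w \<in> C0 B \<union> (if B \<in> T then {r B} else {})"
      proof (cases "w = r B")
        case True
        then have "{w,v} \<notin> E0" using rE0 B by auto
        then obtain B' where "B'\<in>T" "w = r B'" using h by auto
        then have "B' = B" using uniq[of B B'] h B TBs by auto
        then show ?thesis using \<open>B'\<in>T\<close> True by auto
      next
        case False
        have "{w,v} \<in> E0"
        proof (rule ccontr)
          assume "{w,v} \<notin> E0"
          then obtain B' where "B'\<in>T" "w = r B'" using h by auto
          then have "B' = B" using uniq[of B B'] h B TBs by auto
          then show False using False \<open>w = r B'\<close> by simp
        qed
        then show ?thesis using h False unfolding C0_def by auto
      qed
    next
      assume "w \<in> C0 B \<union> (if B \<in> T then {r B} else {})"
      then show "w < n \<and> ({w,v} \<in> E0 \<or> (\<exists>B'\<in>T. w = r B')) \<and> (\<forall>u\<in>B. {w,u}\<in>E0) \<and> (\<forall>u\<in>S-B. {w,u}\<notin>E0)"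
      proof
        assume "w \<in> C0 B" then show ?thesis unfolding C0_def by auto
      next
        assume w: "w \<in> (if B \<in> T then {r B} else {})"
        then have "B \<in> T" "w = r B" by (auto split: if_splits)
        moreover have "\<forall>u\<in>B. {w,u}\<in>E0" "\<forall>u\<in>S-B. {w,u}\<notin>E0"
          using rpat B BS \<open>w = r B\<close> by auto
        ultimately show ?thesis using rn B by auto
      qed
    qed
    finally show "w \<in> {w\<in>{..<n}. (\<forall>u\<in>insert v B. adj E w u) \<and> (\<forall>u\<in>S - B. \<not> adj E w u)}
       \<longleftrightarrow> w \<in> C0 B \<union> (if B \<in> T then {r B} else {})" .
  qed
  have cardCS: "card {w\<in>{..<n}. (\<forall>u\<in>insert v B. adj E w u) \<and> (\<forall>u\<in>S - B. \<not> adj E w u)}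
      = card (C0 B) + (if B \<in> T then 1 else 0)" if B: "B \<in> Bs" for B
  proof -
    have fin: "finite (C0 B)" unfolding C0_def by auto
    have "r B \<notin> C0 B" unfolding C0_def by auto
    then show ?thesis unfolding CS[OF B] using fin by auto
  qed
  have "goodv n S Bf E v"
    unfolding goodv_def
  proof (intro allI impI)
    fix B assume "B \<noteq> {} \<and> B \<subseteq> S"
    then have B: "B \<in> Bs" using Bs by auto
    show "(B \<in> Bf) = odd (card {w\<in>{..<n}. (\<forall>u\<in>insert v B. adj E w u) \<and> (\<forall>u\<in>S - B. \<not> adj E w u)})"
      unfolding cardCS[OF B] using B unfolding T_def by auto
  qed
  then show ?thesis using TBs unfolding E_def by blast
qed



lemma prb_split_bound:
  assumes "finite X" "finite Y" "X \<inter> Y = {}" "c \<ge> 0"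
    and h: "\<And>x. x \<subseteq> X \<Longrightarrow> \<not> Q x \<Longrightarrow> prb Y (\<lambda>y. P (x \<union> y)) \<le> c"
  shows "prb (X \<union> Y) P \<le> prb X Q + c"
proof -
  have "prb (X \<union> Y) P = (\<Sum>x\<in>Pow X. prb Y (\<lambda>y. P (x \<union> y))) / 2 ^ card X"
    by (rule prb_split[OF assms(1-3)])
  also have "\<dots> \<le> (\<Sum>x\<in>Pow X. (if Q x then 1 else 0) + c) / 2 ^ card X"
  proof (intro divide_right_mono sum_mono)
    fix x assume "x \<in> Pow X"
    then show "prb Y (\<lambda>y. P (x \<union> y)) \<le> (if Q x then 1 else 0) + c"
      using h[of x] prb_le1[OF assms(2), of "\<lambda>y. P (x \<union> y)"] assms(4) by (cases "Q x") auto
  qed simp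
  also have "(\<Sum>x\<in>Pow X. (if Q x then 1 else 0) + c) = real (card {x\<in>Pow X. Q x}) + 2 ^ card X * c"
  proof -
    have "(\<Sum>x\<in>Pow X. (if Q x then 1 else 0 :: real)) = (\<Sum>x\<in>{x\<in>Pow X. Q x}. 1)"
      by (subst sum.inter_filter[symmetric]) (use assms(1) in auto)
    then show ?thesis using assms(1) by (simp add: sum.distrib card_Pow)
  qed
  also have "(real (card {x\<in>Pow X. Q x}) + 2 ^ card X * c) / 2 ^ card X = prb X Q + c"
    unfolding prb_def by (simp add: field_simps)
  finally show ?thesis .
qed

lemma prb_indep:
  assumes "finite X" "finite Y" "X \<inter> Y = {}"
  shows "prb (X \<union> Y) (\<lambda>E. P (E \<inter> Y)) = prb Y P"
proof -
  have "prb (X \<union> Y) (\<lambda>E. P (E \<inter> Y)) = (\<Sum>x\<in>Pow X. prb Y (\<lambda>y. P ((x \<union> y) \<inter> Y))) / 2 ^ card X"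
    by (rule prb_split[OF assms])
  also have "\<dots> = (\<Sum>x\<in>Pow X. prb Y P) / 2 ^ card X"
  proof (intro arg_cong[where f="\<lambda>t. t / 2 ^ card X"] sum.cong refl prb_cong)
    fix x y assume "x \<in> Pow X" "y \<subseteq> Y"
    then have "(x \<union> y) \<inter> Y = y" using assms(3) by blast
    then show "P ((x \<union> y) \<inter> Y) = P y" by simp
  qed
  also have "\<dots> = prb Y P" using assms(1) by (simp add: card_Pow)
  finally show ?thesis .
qed

lemma prb_avg_lower:
  assumes "finite X" "finite Y" "X \<inter> Y = {}"
    and h: "\<And>x. x \<subseteq> X \<Longrightarrow> prb Y (\<lambda>y. P (x \<union> y)) \<ge> c"
  shows "prb (X \<union> Y) P \<ge> c"
proof -
  have "c = (\<Sum>x\<in>Pow X. c) / 2 ^ card X" using assms(1) by (simp add: card_Pow)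
  also have "\<dots> \<le> (\<Sum>x\<in>Pow X. prb Y (\<lambda>y. P (x \<union> y))) / 2 ^ card X"
    using h by (intro divide_right_mono sum_mono) auto
  also have "\<dots> = prb (X \<union> Y) P" by (rule prb_split[OF assms(1-3), symmetric])
  finally show ?thesis .
qed

definition Yv :: "nat set \<Rightarrow> nat \<Rightarrow> nat set set" where "Yv R v = (\<lambda>r. {v,r}) ` R"
definition Yall :: "nat set \<Rightarrow> nat set \<Rightarrow> nat set set" where "Yall A R = (\<Union>v\<in>A. Yv R v)"
definition Zw :: "nat set \<Rightarrow> nat \<Rightarrow> nat set set" where "Zw S w = (\<lambda>s. {w,s}) ` S"
definition Wr :: "nat set \<Rightarrow> nat set \<Rightarrow> nat set \<Rightarrow> nat set set \<Rightarrow> nat set" where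
  "Wr S R B x = {w\<in>R. \<forall>s\<in>S. ({w,s}\<in>x \<longleftrightarrow> s\<in>B)}"

lemma finite_all_pairs: "finite (all_pairs n)"
proof -
  have "all_pairs n \<subseteq> Pow {..<n}" unfolding all_pairs_def by auto
  then show ?thesis by (rule finite_subset) simp
qed

lemma pair_in: "a < n \<Longrightarrow> b < n \<Longrightarrow> a \<noteq> b \<Longrightarrow> {a,b} \<in> all_pairs n"
  unfolding all_pairs_def by auto

locale sset =
  fixes n :: nat and S A R :: "nat set"
  assumes Sn: "S \<subseteq> {..<n}" and An: "A \<subseteq> {..<n}" and Rn: "R \<subseteq> {..<n}"
    and AS: "A \<inter> S = {}" and RS: "R \<inter> S = {}" and AR: "A \<inter> R = {}"
begin

lemma finS: "finite S" using Sn finite_subset by blast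
lemma finA: "finite A" using An finite_subset by blast
lemma finR: "finite R" using Rn finite_subset by blast

lemma Yall_sub: "Yall A R \<subseteq> all_pairs n"
proof
  fix e assume "e \<in> Yall A R"
  then obtain v r where "v \<in> A" "r \<in> R" "e = {v,r}" unfolding Yall_def Yv_def by auto
  moreover have "v < n" "r < n" "v \<noteq> r" using \<open>v \<in> A\<close> \<open>r \<in> R\<close> An Rn AR by auto
  ultimately show "e \<in> all_pairs n" using pair_in by simp
qed

lemma Yall_S: "e \<in> Yall A R \<Longrightarrow> u \<in> S \<Longrightarrow> u \<notin> e"
  unfolding Yall_def Yv_def using AS RS by auto

lemma Yall_v: assumes "v \<in> A" "{w,v} \<in> Yall A R" shows "{w,v} \<in> Yv R v"
proof -
  obtain v' r where vr: "v' \<in> A" "r \<in> R" "{w,v} = {v',r}" using assms(2) unfolding Yall_def Yv_def by auto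
  then have "v = v' \<or> v = r" by (auto simp: doubleton_eq_iff)
  then have "v = v'" using vr AR assms(1) by auto
  then show ?thesis using vr unfolding Yv_def by auto
qed

lemma Yv_disj: "v \<in> A \<Longrightarrow> v' \<in> A \<Longrightarrow> v \<noteq> v' \<Longrightarrow> Yv R v \<inter> Yv R v' = {}"
  unfolding Yv_def using AR by (auto simp: doubleton_eq_iff)

lemma finYv: "finite (Yv R v)" unfolding Yv_def using finR by simp

lemma Zw_disj: "w \<in> R \<Longrightarrow> w' \<in> R \<Longrightarrow> w \<noteq> w' \<Longrightarrow> Zw S w \<inter> Zw S w' = {}"
  unfolding Zw_def using RS by (auto simp: doubleton_eq_iff)

lemma card_Zw: assumes "w \<in> R" shows "card (Zw S w) = card S"
proof -
  have "inj_on (\<lambda>s. {w,s}) S" using assms RS by (auto simp: inj_on_def doubleton_eq_iff)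
  then show ?thesis unfolding Zw_def by (rule card_image)
qed

abbreviation "X \<equiv> all_pairs n - Yall A R"

lemma finX: "finite X" using finite_all_pairs by simp

lemma U_split: "all_pairs n = X \<union> Yall A R" "X \<inter> Yall A R = {}"
  using Yall_sub by auto

lemma finYall: "finite (Yall A R)" using finite_all_pairs Yall_sub finite_subset by blast

end



context sset begin

lemma Wr_prob:
  assumes BS: "B \<subseteq> S"
  shows "prb X (\<lambda>x. Wr S R B x = {}) = (1 - 1 / 2 ^ card S) ^ card R"
proof -
  define Zall where "Zall = (\<Union>w\<in>R. Zw S w)"
  define tgt where "tgt w = (\<lambda>s. {w,s}) ` B" for w
  have Zall_sub: "Zall \<subseteq> X"
  proof
    fix e assume "e \<in> Zall"
    then obtain w s where ws: "w \<in> R" "s \<in> S" "e = {w,s}" unfolding Zall_def Zw_def by auto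
    then have "w < n" "s < n" "w \<noteq> s" using Rn Sn RS by auto
    then have "e \<in> all_pairs n" using ws pair_in by simp
    moreover have "e \<notin> Yall A R" using Yall_S[of e s] ws by auto
    ultimately show "e \<in> X" by simp
  qed
  have finZ: "finite Zall" using Zall_sub finX finite_subset by blast
  have Xsplit: "X = (X - Zall) \<union> Zall" "(X - Zall) \<inter> Zall = {}" using Zall_sub by auto
  have key: "(Wr S R B x = {}) \<longleftrightarrow> (\<forall>w\<in>R. (x \<inter> Zall) \<inter> Zw S w \<noteq> tgt w)" for x
  proof -
    have eqv: "(\<forall>s\<in>S. ({w,s}\<in>x \<longleftrightarrow> s\<in>B)) \<longleftrightarrow> (x \<inter> Zall) \<inter> Zw S w = tgt w" if w: "w \<in> R" for w
    proof -
      have wS: "w \<notin> S" using w RS by auto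
      have ZZ: "(x \<inter> Zall) \<inter> Zw S w = x \<inter> Zw S w" using w unfolding Zall_def by auto
      have eq: "{w,s} = {w,s'} \<longleftrightarrow> s = s'" if "s \<in> S" "s' \<in> S" for s s'
        using wS that by (auto simp: doubleton_eq_iff)
      show ?thesis
      proof
        assume h: "\<forall>s\<in>S. ({w,s}\<in>x \<longleftrightarrow> s\<in>B)"
        show "(x \<inter> Zall) \<inter> Zw S w = tgt w"
          unfolding ZZ
        proof (rule set_eqI)
          fix e
          show "e \<in> x \<inter> Zw S w \<longleftrightarrow> e \<in> tgt w"
          proof
            assume "e \<in> x \<inter> Zw S w"
            then obtain s where "s \<in> S" "e = {w,s}" "e \<in> x" unfolding Zw_def by auto
            then show "e \<in> tgt w" using h unfolding tgt_def by auto
          next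
            assume "e \<in> tgt w"
            then obtain s where "s \<in> B" "e = {w,s}" unfolding tgt_def by auto
            then show "e \<in> x \<inter> Zw S w" using h BS unfolding Zw_def by auto
          qed
        qed
      next
        assume h: "(x \<inter> Zall) \<inter> Zw S w = tgt w"
        show "\<forall>s\<in>S. ({w,s}\<in>x \<longleftrightarrow> s\<in>B)"
        proof
          fix s assume s: "s \<in> S"
          have "{w,s} \<in> Zw S w" using s unfolding Zw_def by auto
          then have "{w,s}\<in>x \<longleftrightarrow> {w,s} \<in> tgt w" using h ZZ by blast
          also have "\<dots> \<longleftrightarrow> s \<in> B" unfolding tgt_def using eq s BS by auto
          finally show "{w,s}\<in>x \<longleftrightarrow> s\<in>B" .
        qed
      qed
    qed
    have "Wr S R B x = {} \<longleftrightarrow> (\<forall>w\<in>R. \<not>(\<forall>s\<in>S. ({w,s}\<in>x \<longleftrightarrow> s\<in>B)))"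
      unfolding Wr_def by blast
    then show ?thesis using eqv by blast
  qed
  have "prb X (\<lambda>x. Wr S R B x = {}) = prb ((X - Zall) \<union> Zall) (\<lambda>x. (\<forall>w\<in>R. (x \<inter> Zall) \<inter> Zw S w \<noteq> tgt w))"
    using key Xsplit(1) by simp
  also have "\<dots> = prb Zall (\<lambda>z. \<forall>w\<in>R. z \<inter> Zw S w \<noteq> tgt w)"
    by (rule prb_indep[where P="\<lambda>z. \<forall>w\<in>R. z \<inter> Zw S w \<noteq> tgt w"]) (use finX finZ Xsplit in auto)
  also have "\<dots> = (\<Prod>w\<in>R. prb (Zw S w) (\<lambda>z. z \<noteq> tgt w))"
    unfolding Zall_def
    by (rule prb_prod[where P="\<lambda>w z. z \<noteq> tgt w"]) (use finR finS Zw_disj in \<open>auto simp: Zw_def\<close>)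
  also have "\<dots> = (\<Prod>w\<in>R. 1 - 1 / 2 ^ card S)"
  proof (rule prod.cong[OF refl])
    fix w assume w: "w \<in> R"
    have fz: "finite (Zw S w)" using finS unfolding Zw_def by simp
    have "tgt w \<subseteq> Zw S w" using BS unfolding tgt_def Zw_def by auto
    then have "prb (Zw S w) (\<lambda>z. z = tgt w) = 1 / 2 ^ card (Zw S w)" by (rule prb_eq_point[OF fz])
    then show "prb (Zw S w) (\<lambda>z. z \<noteq> tgt w) = 1 - 1 / 2 ^ card S"
      using prb_compl[OF fz, of "\<lambda>z. z = tgt w"] card_Zw[OF w] by simp
  qed
  also have "\<dots> = (1 - 1 / 2 ^ card S) ^ card R" by simp
  finally show ?thesis .
qed

end


context sset begin

lemma perv:
  assumes x: "x \<subseteq> X" and W: "\<forall>B\<in>Bs. Wr S R B x \<noteq> {}" and v: "v \<in> A"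
    and Bs: "Bs = {B. B \<noteq> {} \<and> B \<subseteq> S}"
  shows "prb (Yv R v) (\<lambda>z. goodv n S Bf (x \<union> z) v) \<ge> 1 / 2 ^ card Bs"
proof -
  define r where "r B = (SOME w. w \<in> Wr S R B x)" for B
  have rW: "r B \<in> Wr S R B x" if "B \<in> Bs" for B
    unfolding r_def using W that by (metis ex_in_conv someI_ex)
  have rR: "r B \<in> R" and rpatx: "\<forall>s\<in>S. ({r B,s}\<in>x \<longleftrightarrow> s\<in>B)" if "B \<in> Bs" for B
    using rW[OF that] unfolding Wr_def by auto
  have vS: "v \<notin> S" using v AS by auto
  have rv: "r B \<noteq> v" if "B \<in> Bs" for B using rR[OF that] v AR by auto
  define Dv where "Dv = (\<lambda>B. {v, r B}) ` Bs"
  have inj: "inj_on (\<lambda>B. {v, r B}) Bs"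
  proof (rule inj_onI)
    fix B B' assume B: "B \<in> Bs" "B' \<in> Bs" "{v, r B} = {v, r B'}"
    then have "r B = r B'" using rv by (auto simp: doubleton_eq_iff)
    then have "\<forall>s\<in>S. (s \<in> B \<longleftrightarrow> s \<in> B')" using rpatx[OF B(1)] rpatx[OF B(2)] by auto
    moreover have "B \<subseteq> S" "B' \<subseteq> S" using B Bs by auto
    ultimately show "B = B'" by blast
  qed
  have cardD: "card Dv = card Bs" unfolding Dv_def by (rule card_image[OF inj])
  have DY: "Dv \<subseteq> Yv R v" unfolding Dv_def Yv_def using rR by auto
  have finD: "finite Dv" using DY finYv finite_subset by blast
  have Ysplit: "Yv R v = (Yv R v - Dv) \<union> Dv" "(Yv R v - Dv) \<inter> Dv = {}" using DY by auto
  have YvYall: "Yv R v \<subseteq> Yall A R" using v unfolding Yall_def by auto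
  have "prb ((Yv R v - Dv) \<union> Dv) (\<lambda>z. goodv n S Bf (x \<union> z) v) \<ge> 1 / 2 ^ card Bs"
  proof (rule prb_avg_lower)
    show "finite (Yv R v - Dv)" using finYv by simp
    show "finite Dv" by (rule finD)
    show "(Yv R v - Dv) \<inter> Dv = {}" by auto
  next
    fix a assume a: "a \<subseteq> Yv R v - Dv"
    have aY: "a \<subseteq> Yall A R" using a YvYall by auto
    have "\<exists>T\<subseteq>Bs. goodv n S Bf ((x \<union> a) \<union> (\<lambda>B. {v, r B}) ` T) v"
    proof -
    have rv': "\<forall>B\<in>Bs. r B \<noteq> v" using rv by auto
    show "\<exists>T\<subseteq>Bs. goodv n S Bf ((x \<union> a) \<union> (\<lambda>B. {v, r B}) ` T) v"
    proof (rule parity_fix[OF vS _ rv' _ _ _ Bs])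
      show "\<forall>B\<in>Bs. r B < n" using rR Rn by auto
      show "\<forall>B\<in>Bs. r B \<notin> S" using rR RS by auto
      show "\<forall>B\<in>Bs. \<forall>s\<in>S. ({r B, s} \<in> x \<union> a \<longleftrightarrow> s \<in> B)"
      proof (intro ballI)
        fix B s assume B: "B \<in> Bs" and s: "s \<in> S"
        have "{r B, s} \<notin> a" using Yall_S[of "{r B, s}" s] aY s by auto
        then show "({r B, s} \<in> x \<union> a \<longleftrightarrow> s \<in> B)" using rpatx[OF B] s by auto
      qed
      show "\<forall>B\<in>Bs. {r B, v} \<notin> x \<union> a"
      proof
        fix B assume B: "B \<in> Bs"
        have e: "{r B, v} = {v, r B}" by (simp add: insert_commute)
        have "{v, r B} \<in> Dv" unfolding Dv_def using B by auto
        then have "{v, r B} \<in> Yall A R" using DY YvYall by auto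
        then have "{v, r B} \<notin> x" using x by auto
        moreover have "{v, r B} \<notin> a" using a \<open>{v, r B} \<in> Dv\<close> by auto
        ultimately show "{r B, v} \<notin> x \<union> a" using e by simp
      qed
    qed
    qed
    then obtain T where T: "T \<subseteq> Bs" "goodv n S Bf ((x \<union> a) \<union> (\<lambda>B. {v, r B}) ` T) v" by blast
    have "prb Dv (\<lambda>y. goodv n S Bf (x \<union> (a \<union> y)) v) \<ge> 1 / 2 ^ card Dv"
    proof (rule prb_point[OF finD])
      show "(\<lambda>B. {v, r B}) ` T \<subseteq> Dv" unfolding Dv_def using T by auto
      show "goodv n S Bf (x \<union> (a \<union> (\<lambda>B. {v, r B}) ` T)) v" using T(2) by (simp add: Un_assoc)
    qed
    then show "1 / 2 ^ card Bs \<le> prb Dv (\<lambda>y. goodv n S Bf (x \<union> (a \<union> y)) v)" using cardD by simp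
  qed
  then show ?thesis using Ysplit(1) by simp
qed

lemma main_bound:
  assumes Bs: "Bs = {B. B \<noteq> {} \<and> B \<subseteq> S}"
  shows "prb (all_pairs n) (\<lambda>E. \<forall>v\<in>A. \<not> goodv n S Bf E v)
    \<le> card Bs * (1 - 1 / 2 ^ card S) ^ card R + (1 - 1 / 2 ^ card Bs) ^ card A"
proof -
  have finBs: "finite Bs" using finS Bs by (metis (no_types, lifting) Collect_mono Pow_def finite_Pow_iff finite_subset)
  have c0: "(0::real) \<le> (1 - 1 / 2 ^ card Bs) ^ card A" by simp
  have "prb (X \<union> Yall A R) (\<lambda>E. \<forall>v\<in>A. \<not> goodv n S Bf E v)
      \<le> prb X (\<lambda>x. \<exists>B\<in>Bs. Wr S R B x = {}) + (1 - 1 / 2 ^ card Bs) ^ card A"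
  proof (rule prb_split_bound[OF finX finYall U_split(2) c0])
    fix x assume x: "x \<subseteq> X" and nQ: "\<not> (\<exists>B\<in>Bs. Wr S R B x = {})"
    have "prb (Yall A R) (\<lambda>y. \<forall>v\<in>A. \<not> goodv n S Bf (x \<union> y) v)
        = prb (\<Union>v\<in>A. Yv R v) (\<lambda>y. \<forall>v\<in>A. \<not> goodv n S Bf (x \<union> (y \<inter> Yv R v)) v)"
      unfolding Yall_def[symmetric]
    proof (rule prb_cong)
      fix y assume y: "y \<subseteq> Yall A R"
      have "goodv n S Bf (x \<union> y) v = goodv n S Bf (x \<union> (y \<inter> Yv R v)) v" if v: "v \<in> A" for v
      proof (rule goodv_cong)
        fix w u assume u: "u \<in> insert v S"
        show "{w,u} \<in> x \<union> y \<longleftrightarrow> {w,u} \<in> x \<union> (y \<inter> Yv R v)"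
        proof (cases "u = v")
          case True
          have "{w,v} \<in> y \<Longrightarrow> {w,v} \<in> Yv R v" using Yall_v[OF v, of w] y by auto
          then show ?thesis using True by auto
        next
          case False
          then have "u \<in> S" using u by auto
          then have "{w,u} \<notin> Yall A R" using Yall_S[of "{w,u}" u] by auto
          then show ?thesis using y by auto
        qed
      qed
      then show "(\<forall>v\<in>A. \<not> goodv n S Bf (x \<union> y) v) = (\<forall>v\<in>A. \<not> goodv n S Bf (x \<union> (y \<inter> Yv R v)) v)"
        by auto
    qed
    also have "\<dots> = (\<Prod>v\<in>A. prb (Yv R v) (\<lambda>z. \<not> goodv n S Bf (x \<union> z) v))"
      by (rule prb_prod[where P="\<lambda>v z. \<not> goodv n S Bf (x \<union> z) v"]) (use finA finYv Yv_disj in auto)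
    also have "\<dots> \<le> (\<Prod>v\<in>A. 1 - 1 / 2 ^ card Bs)"
    proof (rule prod_mono)
      fix v assume v: "v \<in> A"
      have "prb (Yv R v) (\<lambda>z. \<not> goodv n S Bf (x \<union> z) v) = 1 - prb (Yv R v) (\<lambda>z. goodv n S Bf (x \<union> z) v)"
        by (rule prb_compl[OF finYv])
      moreover have "prb (Yv R v) (\<lambda>z. goodv n S Bf (x \<union> z) v) \<ge> 1 / 2 ^ card Bs"
        by (rule perv[OF x _ v Bs]) (use nQ in auto)
      ultimately show "0 \<le> prb (Yv R v) (\<lambda>z. \<not> goodv n S Bf (x \<union> z) v) \<and>
          prb (Yv R v) (\<lambda>z. \<not> goodv n S Bf (x \<union> z) v) \<le> 1 - 1 / 2 ^ card Bs"
        using prb_nonneg prb_le1[OF finYv, of v "\<lambda>z. goodv n S Bf (x \<union> z) v"] by auto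
    qed
    also have "\<dots> = (1 - 1 / 2 ^ card Bs) ^ card A" by simp
    finally show "prb (Yall A R) (\<lambda>y. \<forall>v\<in>A. \<not> goodv n S Bf (x \<union> y) v) \<le> (1 - 1 / 2 ^ card Bs) ^ card A" .
  qed
  also have "prb X (\<lambda>x. \<exists>B\<in>Bs. Wr S R B x = {}) \<le> (\<Sum>B\<in>Bs. prb X (\<lambda>x. Wr S R B x = {}))"
    by (rule prb_union[OF finX finBs])
  also have "\<dots> = (\<Sum>B\<in>Bs. (1 - 1 / 2 ^ card S) ^ card R)"
    by (rule sum.cong[OF refl]) (use Wr_prob Bs in auto)
  also have "\<dots> = card Bs * (1 - 1 / 2 ^ card S) ^ card R" by simp
  finally show ?thesis using U_split(1) by simp
qed

end


lemma prob_as_prb: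
  "measure_pmf.prob (Gnp_half n) G = prb (all_pairs n) (\<lambda>E. E \<in> G)"
proof -
  have fin: "finite (Pow (all_pairs n))" using finite_all_pairs by simp
  have ne: "Pow (all_pairs n) \<noteq> {}" by auto
  have "measure_pmf.prob (Gnp_half n) G = card (Pow (all_pairs n) \<inter> G) / card (Pow (all_pairs n))"
    unfolding Gnp_half_def by (rule measure_pmf_of_set[OF ne fin])
  moreover have "Pow (all_pairs n) \<inter> G = {E\<in>Pow (all_pairs n). E \<in> G}" by auto
  ultimately show ?thesis unfolding prb_def using finite_all_pairs by (simp add: card_Pow)
qed

lemma fail_bound:
  fixes k n :: nat
  defines "\<rho> \<equiv> 1 - 1 / 2 ^ (2 ^ k) :: real"
  shows "1 - measure_pmf.prob (Gnp_half n)
      {E. \<forall>S. S \<subseteq> {..<n} \<and> card S = k \<longrightarrow>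
            (\<forall>Bf. Bf \<subseteq> {B. B \<noteq> {} \<and> B \<subseteq> S} \<longrightarrow> (\<exists>v\<in>{..<n}. v \<notin> S \<and> goodv n S Bf E v))}
    \<le> real n ^ k * 2 ^ (2 ^ k) * (2 ^ k + 1) * \<rho> ^ ((n - k) div 2)"
proof -
  define U where "U = all_pairs n"
  define Good where "Good = {E. \<forall>S. S \<subseteq> {..<n} \<and> card S = k \<longrightarrow>
            (\<forall>Bf. Bf \<subseteq> {B. B \<noteq> {} \<and> B \<subseteq> S} \<longrightarrow> (\<exists>v\<in>{..<n}. v \<notin> S \<and> goodv n S Bf E v))}"
  define m where "m = (n - k) div 2"
  define SS where "SS = {S. S \<subseteq> {..<n} \<and> card S = k}"
  define Bs where "Bs S = {B. B \<noteq> {} \<and> B \<subseteq> S}" for S :: "nat set"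
  define I where "I = (SIGMA S:SS. Pow (Bs S))"
  define T where "T S = {..<n} - S" for S :: "nat set"
  define A where "A S = (SOME A. A \<subseteq> T S \<and> card A = card (T S) div 2)" for S
  define R where "R S = T S - A S" for S
  have finU: "finite U" unfolding U_def by (rule finite_all_pairs)
  have finSS: "finite SS" unfolding SS_def by (rule finite_subset[of _ "Pow {..<n}"]) auto
  have finBs: "finite (Bs S)" if "S \<in> SS" for S
    using that unfolding SS_def Bs_def by (rule_tac finite_subset[of _ "Pow S"]) (auto intro: finite_subset)
  have finI: "finite I" unfolding I_def using finSS finBs by auto
  have A: "A S \<subseteq> T S \<and> card (A S) = card (T S) div 2" for S
  proof -
    have "finite (T S)" unfolding T_def by simp
    have "\<exists>A. A \<subseteq> T S \<and> card A = card (T S) div 2"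
      using obtain_subset_with_card_n[of "card (T S) div 2" "T S"] by auto
    then show ?thesis unfolding A_def by (rule someI_ex)
  qed
  have cardT: "card (T S) = n - k" if "S \<in> SS" for S
  proof -
    have S: "S \<subseteq> {..<n}" "card S = k" using that unfolding SS_def by auto
    have "finite S" using S(1) finite_subset by blast
    then show ?thesis unfolding T_def using card_Diff_subset[OF \<open>finite S\<close> S(1)] S by simp
  qed
  have \<rho>: "0 \<le> \<rho>" "\<rho> \<le> 1" unfolding \<rho>_def by auto
  have k2: "(2::real) ^ k \<le> 2 ^ (2 ^ k)" by (rule power_increasing) (auto intro: less_imp_le less_exp)
  have bnd: "prb U (\<lambda>E. \<forall>v\<in>A S. \<not> goodv n S Bf E v) \<le> (2 ^ k + 1) * \<rho> ^ m"
    if i: "(S, Bf) \<in> I" for S Bf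
  proof -
    have S: "S \<in> SS" using i unfolding I_def by auto
    have cS: "card S = k" using S unfolding SS_def by auto
    interpret sset n S "A S" "R S"
      using S A[of S] unfolding SS_def T_def R_def by unfold_locales auto
    have cA: "card (A S) = m" using A[of S] cardT[OF S] unfolding m_def by simp
    have cR: "card (R S) \<ge> m"
    proof -
      have "card (R S) = card (T S) - card (A S)" unfolding R_def
        using A[of S] by (intro card_Diff_subset) (auto simp: T_def intro: finite_subset)
      then have "card (R S) = (n - k) - (n - k) div 2" using cA cardT[OF S] unfolding m_def by simp
      then show ?thesis unfolding m_def by linarith
    qed
    have cB: "card (Bs S) \<le> 2 ^ k"
    proof -
      have "card (Bs S) \<le> card (Pow S)" unfolding Bs_def using finS by (intro card_mono) auto
      then show ?thesis using finS cS by (simp add: card_Pow)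
    qed
    have "real (card (Bs S)) \<le> real (2 ^ k)" using cB by (simp only: of_nat_le_iff)
    then have cBr: "real (card (Bs S)) \<le> 2 ^ k" by simp
    have "prb U (\<lambda>E. \<forall>v\<in>A S. \<not> goodv n S Bf E v)
       \<le> card (Bs S) * (1 - 1 / 2 ^ card S) ^ card (R S) + (1 - 1 / 2 ^ card (Bs S)) ^ card (A S)"
      unfolding U_def by (rule main_bound) (simp add: Bs_def)
    also have "\<dots> \<le> 2 ^ k * \<rho> ^ m + \<rho> ^ m"
    proof (rule add_mono)
      have "(1 - 1 / 2 ^ card S) ^ card (R S) \<le> \<rho> ^ card (R S)"
        unfolding cS \<rho>_def using k2 by (intro power_mono) (auto simp: field_simps)
      also have "\<dots> \<le> \<rho> ^ m" using \<rho> cR by (intro power_decreasing) auto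
      finally have "(1 - 1 / 2 ^ card S) ^ card (R S) \<le> \<rho> ^ m" .
      moreover have "0 \<le> (1 - 1 / 2 ^ card S :: real) ^ card (R S)" by simp
      ultimately show "card (Bs S) * (1 - 1 / 2 ^ card S) ^ card (R S) \<le> 2 ^ k * \<rho> ^ m"
        using cBr by (intro mult_mono) auto
    next
      have "(2::real) ^ card (Bs S) \<le> 2 ^ (2 ^ k)" using cB by (intro power_increasing) auto
      then have "(1 - 1 / 2 ^ card (Bs S)) \<le> \<rho>" unfolding \<rho>_def by (auto simp: field_simps)
      then show "(1 - 1 / 2 ^ card (Bs S)) ^ card (A S) \<le> \<rho> ^ m"
        unfolding cA by (intro power_mono) auto
    qed
    finally show ?thesis by (simp add: algebra_simps)
  qed
  have cardI: "real (card I) \<le> real n ^ k * 2 ^ (2 ^ k)"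
  proof -
    have "card I = (\<Sum>S\<in>SS. card (Pow (Bs S)))" unfolding I_def using finSS finBs by (simp add: card_SigmaI)
    also have "\<dots> \<le> (\<Sum>S\<in>SS. 2 ^ (2 ^ k))"
    proof (rule sum_mono)
      fix S assume S: "S \<in> SS"
      have fS: "finite S" using S unfolding SS_def by (auto intro: finite_subset)
      have "card (Bs S) \<le> card (Pow S)" unfolding Bs_def using fS by (intro card_mono) auto
      then have "card (Bs S) \<le> 2 ^ k" using fS S unfolding SS_def by (simp add: card_Pow)
      then show "card (Pow (Bs S)) \<le> 2 ^ (2 ^ k)" using finBs[OF S] by (simp add: card_Pow)
    qed
    also have "\<dots> = card SS * 2 ^ (2 ^ k)" by simp
    finally have c1: "card I \<le> card SS * 2 ^ (2 ^ k)" .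
    have "card SS \<le> n ^ k"
    proof -
      have "card SS = n choose k" unfolding SS_def using n_subsets[of "{..<n}" k] by simp
      moreover have "n choose k \<le> n ^ k"
      proof (cases "k \<le> n")
        case True then show ?thesis by (rule binomial_le_pow)
      next
        case False then show ?thesis by (simp add: binomial_eq_0)
      qed
      ultimately show ?thesis by simp
    qed
    then have "card SS * 2 ^ (2 ^ k) \<le> n ^ k * (2::nat) ^ (2 ^ k)" by (rule mult_right_mono) simp
    with c1 have "card I \<le> n ^ k * 2 ^ (2 ^ k)" by (rule le_trans)
    then have "real (card I) \<le> real (n ^ k * 2 ^ (2 ^ k))" by (simp only: of_nat_le_iff)
    then show ?thesis by simp
  qed
  have "1 - measure_pmf.prob (Gnp_half n) Good = prb U (\<lambda>E. E \<notin> Good)"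
    unfolding prob_as_prb U_def using prb_compl[OF finite_all_pairs, of n "\<lambda>E. E \<in> Good"] by simp
  also have "\<dots> \<le> prb U (\<lambda>E. \<exists>i\<in>I. \<forall>v\<in>A (fst i). \<not> goodv n (fst i) (snd i) E v)"
  proof (rule prb_mono[OF finU])
    fix E assume "E \<notin> Good"
    then obtain S Bf where S: "S \<subseteq> {..<n}" "card S = k" and Bf: "Bf \<subseteq> Bs S"
      and no: "\<not> (\<exists>v\<in>{..<n}. v \<notin> S \<and> goodv n S Bf E v)"
      unfolding Good_def Bs_def by auto
    have "(S, Bf) \<in> I" unfolding I_def SS_def using S Bf by auto
    moreover have "\<forall>v\<in>A S. \<not> goodv n S Bf E v" using no A[of S] unfolding T_def by auto
    ultimately show "\<exists>i\<in>I. \<forall>v\<in>A (fst i). \<not> goodv n (fst i) (snd i) E v"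
      by (intro bexI[of _ "(S, Bf)"]) simp_all
  qed
  also have "\<dots> \<le> (\<Sum>i\<in>I. prb U (\<lambda>E. \<forall>v\<in>A (fst i). \<not> goodv n (fst i) (snd i) E v))"
    by (rule prb_union[OF finU finI])
  also have "\<dots> \<le> (\<Sum>i\<in>I. (2 ^ k + 1) * \<rho> ^ m)"
  proof (rule sum_mono)
    fix i assume i: "i \<in> I"
    obtain S Bf where "i = (S, Bf)" by (cases i)
    then show "prb U (\<lambda>E. \<forall>v\<in>A (fst i). \<not> goodv n (fst i) (snd i) E v) \<le> (2 ^ k + 1) * \<rho> ^ m"
      using bnd[of S Bf] i by simp
  qed
  also have "\<dots> = real (card I) * ((2 ^ k + 1) * \<rho> ^ m)" by simp
  also have "\<dots> \<le> (real n ^ k * 2 ^ (2 ^ k)) * ((2 ^ k + 1) * \<rho> ^ m)"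
    using cardI \<rho> by (intro mult_right_mono) auto
  finally have fin: "1 - measure_pmf.prob (Gnp_half n) Good \<le> real n ^ k * 2 ^ (2 ^ k) * (2 ^ k + 1) * \<rho> ^ m"
    by (simp only: mult.assoc)
  show ?thesis using fin unfolding Good_def m_def .
qed



theorem mainTheorem13:
  fixes k :: nat
  assumes "k \<ge> 1"
  shows "\<exists>\<epsilon>. negl \<epsilon> \<and> (\<forall>n.
    measure_pmf.prob (Gnp_half n)
      {E. \<forall>S. S \<subseteq> {..<n} \<and> card S = k \<longrightarrow>
            (\<forall>\<B>. \<B> \<subseteq> {B. B \<noteq> {} \<and> B \<subseteq> S} \<longrightarrow>
              (\<exists>v\<in>{..<n}. v \<notin> S \<and>
                 (\<forall>B. B \<noteq> {} \<and> B \<subseteq> S \<longrightarrow>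
                    (B \<in> \<B> \<longleftrightarrow>
                     odd (card {w\<in>{..<n}. (\<forall>u\<in>insert v B. adj E w u) \<and>
                                          (\<forall>u\<in>S - B. \<not> adj E w u)})))))}
    \<ge> 1 - \<epsilon> n)"
proof -
  define Good where "Good n = {E. \<forall>S. S \<subseteq> {..<n} \<and> card S = k \<longrightarrow>
            (\<forall>Bf. Bf \<subseteq> {B. B \<noteq> {} \<and> B \<subseteq> S} \<longrightarrow> (\<exists>v\<in>{..<n}. v \<notin> S \<and> goodv n S Bf E v))}" for n
  define \<epsilon> where "\<epsilon> n = 1 - measure_pmf.prob (Gnp_half n) (Good n)" for n
  define \<rho> :: real where "\<rho> = 1 - 1 / 2 ^ (2 ^ k)"
  define \<sigma> where "\<sigma> = sqrt \<rho>"
  define C :: real where "C = 2 ^ (2 ^ k) * (2 ^ k + 1)"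
  define C' where "C' = C / \<sigma> ^ (k + 1)"
  have two: "(2::real) \<le> 2 ^ (2 ^ k)"
    using power_increasing[of 1 "2 ^ k" "2::real"] by simp
  have \<rho>: "0 < \<rho>" "\<rho> < 1" unfolding \<rho>_def using two by (auto simp: field_simps)
  have \<sigma>: "0 < \<sigma>" "\<sigma> < 1" unfolding \<sigma>_def using \<rho> by auto
  have \<sigma>2: "\<sigma> ^ 2 = \<rho>" unfolding \<sigma>_def using \<rho> by simp
  have Cpos: "C > 0" unfolding C_def by (intro mult_pos_pos) (auto intro: add_pos_pos)
  have C'pos: "C' > 0" unfolding C'_def using Cpos \<sigma> by simp
  have bound: "\<epsilon> n \<le> real n ^ k * C * \<rho> ^ ((n - k) div 2)" for n
    using fail_bound[of n k] unfolding \<epsilon>_def Good_def C_def \<rho>_def by (simp add: mult.assoc)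
  have eps0: "\<epsilon> n \<ge> 0" for n unfolding \<epsilon>_def by (simp add: measure_pmf.prob_le_1)
  have "negl \<epsilon>"
    unfolding negl_def
  proof
    fix c :: nat
    have lim: "(\<lambda>n. real n ^ Suc (k + c) * \<sigma> ^ n) \<longlonglongrightarrow> 0"
      by (rule poly_geom_lim) (use \<sigma> in auto)
    have ev1: "\<forall>\<^sub>F n in sequentially. real n ^ Suc (k + c) * \<sigma> ^ n < 1 / C'"
      using order_tendstoD(2)[OF lim] C'pos by simp
    have ev2: "\<forall>\<^sub>F n in sequentially. k + 1 \<le> n" by (rule eventually_ge_at_top)
    show "\<forall>\<^sub>F n in sequentially. \<bar>\<epsilon> n\<bar> < 1 / real n ^ c"
      using ev1 ev2
    proof eventually_elim
      case (elim n)
      have n1: "real n \<ge> 1" using elim(2) by simp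
      have np: "real n ^ c > 0" using n1 by simp
      define m where "m = (n - k) div 2"
      have "\<rho> ^ m = \<sigma> ^ (2 * m)" unfolding \<sigma>2[symmetric] by (simp add: power_mult)
      also have "\<dots> \<le> \<sigma> ^ (n - k - 1)"
        using \<sigma> unfolding m_def by (intro power_decreasing) auto
      finally have r1: "\<rho> ^ m \<le> \<sigma> ^ (n - k - 1)" .
      have e: "(n - k - 1) + (k + 1) = n" using elim(2) by simp
      have "\<sigma> ^ n = \<sigma> ^ (n - k - 1) * \<sigma> ^ (k + 1)"
        by (metis e power_add)
      then have r2: "\<sigma> ^ (n - k - 1) = \<sigma> ^ n / \<sigma> ^ (k + 1)" using \<sigma> by simp
      have "\<epsilon> n \<le> real n ^ k * C * \<rho> ^ m" using bound[of n] unfolding m_def .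
      also have "\<dots> \<le> real n ^ k * C * (\<sigma> ^ n / \<sigma> ^ (k + 1))"
        using r1 r2 Cpos by (intro mult_left_mono) auto
      also have "\<dots> = C' * (real n ^ k * \<sigma> ^ n)" unfolding C'_def by simp
      finally have e1: "\<epsilon> n \<le> C' * (real n ^ k * \<sigma> ^ n)" .
      have "\<epsilon> n * real n ^ c \<le> C' * (real n ^ k * \<sigma> ^ n) * real n ^ c"
        using e1 np by (intro mult_right_mono) auto
      also have "\<dots> = C' * (real n ^ (k + c) * \<sigma> ^ n)" by (simp add: power_add)
      also have "\<dots> \<le> C' * (real n ^ Suc (k + c) * \<sigma> ^ n)"
      proof -
        have "real n ^ (k + c) \<le> real n ^ Suc (k + c)" using n1 by (intro power_increasing) auto
        then show ?thesis using C'pos \<sigma> by (intro mult_left_mono mult_right_mono) auto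
      qed
      also have "\<dots> < C' * (1 / C')" using elim(1) C'pos by (intro mult_strict_left_mono) auto
      also have "\<dots> = 1" using C'pos by simp
      finally have "\<epsilon> n * real n ^ c < 1" .
      then have "\<epsilon> n < 1 / real n ^ c" using np by (simp add: field_simps)
      then show ?case using eps0[of n] by simp
    qed
  qed
  moreover have "\<forall>n. measure_pmf.prob (Gnp_half n)
      {E. \<forall>S. S \<subseteq> {..<n} \<and> card S = k \<longrightarrow>
            (\<forall>\<B>. \<B> \<subseteq> {B. B \<noteq> {} \<and> B \<subseteq> S} \<longrightarrow>
              (\<exists>v\<in>{..<n}. v \<notin> S \<and>
                 (\<forall>B. B \<noteq> {} \<and> B \<subseteq> S \<longrightarrow>
                    (B \<in> \<B> \<longleftrightarrow>
                     odd (card {w\<in>{..<n}. (\<forall>u\<in>insert v B. adj E w u) \<and>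
                                          (\<forall>u\<in>S - B. \<not> adj E w u)})))))}
    \<ge> 1 - \<epsilon> n"
    unfolding \<epsilon>_def Good_def goodv_def by simp
  ultimately show ?thesis by blast
qed


end
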